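(* Let $a,b,e\in\mathbb Z$ with $a\neq0$, $e>0$, such that $h_2(j)=aj^2+bj+e$ satisfies $h_2(j)\ge0$ for all integers $j\ge0$ (so $h_2\in\mathcal H_0$). Then $\operatorname{hdepth}(h_2)\le 13$.
   Context: Let $\mathcal H_0$ denote the set of functions $h:\mathbb Z_{\ge 0}\to\mathbb Z_{\ge 0}$ with $h(0)>0$. For $h\in\mathcal H_0$ and integers $0\le k\le d$, put $\beta_k^d(h)=\sum_{j=0}^k(-1)^{k-j}\binom{d-j}{k-j}h(j)$. The Hilbert depth of $h$ is $\operatorname{hdepth}(h)=\max\{d\in\mathbb Z_{\ge0}:\ \beta_k^d(h)\ge 0\text{ for all }0\le k\le d\}$; this set contains $d=0$ and is known to be bounded above by $\lfloor h(1)/h(0)\rfloor$, so the maximum exists. *)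

theory Defs
  imports Main
begin

text \<open>Functions h : Z>=0 -> Z>=0 are modelled as nat => nat.\<close>

definition beta :: "(nat \<Rightarrow> nat) \<Rightarrow> nat \<Rightarrow> nat \<Rightarrow> int" where
  "beta h d k = (\<Sum>j\<le>k. (-1) ^ (k - j) * int ((d - j) choose (k - j)) * int (h j))"

definition hdepth :: "(nat \<Rightarrow> nat) \<Rightarrow> nat" where
  "hdepth h = (GREATEST d. \<forall>k\<le>d. beta h d k \<ge> 0)"

end

theory Submission
  imports Defs
begin

lemma beta_0: "beta h d 0 = int (h 0)"
  by (simp add: beta_def)

lemma beta_step:
  assumes "k < d"
  shows "beta h (Suc d) (Suc k) = beta h d (Suc k) - beta h d k"
proof -
  have A: "beta h (Suc d) (Suc k) = int (h (Suc k)) +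
      (\<Sum>j\<le>k. (-1) ^ (Suc k - j) * int ((Suc d - j) choose (Suc k - j)) * int (h j))"
    by (simp add: beta_def)
  have B: "beta h d (Suc k) = int (h (Suc k)) +
      (\<Sum>j\<le>k. (-1) ^ (Suc k - j) * int ((d - j) choose (Suc k - j)) * int (h j))"
    using assms by (simp add: beta_def)
  have C: "(\<Sum>j\<le>k. (-1) ^ (Suc k - j) * int ((Suc d - j) choose (Suc k - j)) * int (h j))
     = (\<Sum>j\<le>k. (-1) ^ (Suc k - j) * int ((d - j) choose (Suc k - j)) * int (h j))
       - (\<Sum>j\<le>k. (-1) ^ (k - j) * int ((d - j) choose (k - j)) * int (h j))"
    unfolding sum_subtractf[symmetric]
  proof (rule sum.cong[OF refl])
    fix j assume "j \<in> {..k}"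
    then have j: "j \<le> k" by simp
    then have e1: "Suc d - j = Suc (d - j)" "Suc k - j = Suc (k - j)" using assms by auto
    show "(-1) ^ (Suc k - j) * int ((Suc d - j) choose (Suc k - j)) * int (h j) =
          (-1) ^ (Suc k - j) * int ((d - j) choose (Suc k - j)) * int (h j) -
          (-1) ^ (k - j) * int ((d - j) choose (k - j)) * int (h j)"
      unfolding e1 by (simp add: algebra_simps)
  qed
  show ?thesis using A B C by (simp add: beta_def)
qed

lemma down:
  assumes "\<forall>k\<le>Suc d. beta h (Suc d) k \<ge> 0"
  shows "\<forall>k\<le>d. beta h d k \<ge> 0"
proof (intro allI impI)
  fix k assume "k \<le> d"
  then show "beta h d k \<ge> 0"
  proof (induction k)
    case 0 then show ?case by (simp add: beta_0)
  next
    case (Suc k)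
    then have "k < d" by simp
    from beta_step[OF this, of h] have "beta h d (Suc k) = beta h (Suc d) (Suc k) + beta h d k" by simp
    moreover have "beta h (Suc d) (Suc k) \<ge> 0" using assms Suc.prems by simp
    ultimately show ?case using Suc by simp
  qed
qed

lemma down14:
  assumes "\<forall>k\<le>14 + n. beta h (14 + n) k \<ge> 0"
  shows "\<forall>k\<le>14. beta h 14 k \<ge> 0"
  using assms
proof (induction n)
  case 0 then show ?case by simp
next
  case (Suc n)
  then show ?case using down[of "14 + n" h] by simp
qed

lemma b14:
  fixes H :: "nat \<Rightarrow> int"
  assumes "\<And>j. int (h j) = H j"
  shows "beta h 14 1 = H 1 - 14 * H 0"
    and "beta h 14 4 = 1001 * H 0 - 286 * H 1 + 66 * H 2 - 11 * H 3 + H 4"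
    and "beta h 14 5 = - 2002 * H 0 + 715 * H 1 - 220 * H 2 + 55 * H 3 - 10 * H 4 + H 5"
  unfolding beta_def assms by (simp_all add: atMost_Suc numeral_eq_Suc)

lemma a_pos:
  fixes a b e :: int
  assumes "a \<noteq> 0" and "\<forall>j::nat. a * int j ^ 2 + b * int j + e \<ge> 0"
  shows "a > 0"
proof (rule ccontr)
  assume "\<not> a > 0"
  then have a: "a \<le> -1" using assms(1) by simp
  define j where "j = nat (\<bar>b\<bar> + \<bar>e\<bar> + 1)"
  have jj: "int j = \<bar>b\<bar> + \<bar>e\<bar> + 1" unfolding j_def by simp
  have "a * int j ^ 2 \<le> (-1) * (int j ^ 2)" by (rule mult_right_mono[OF a]) simp
  moreover have "b * int j \<le> \<bar>b\<bar> * int j" using jj by (simp add: mult_right_mono)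
  moreover have "int j ^ 2 = int j * int j" by (simp add: power2_eq_square)
  moreover have "int j * int j \<ge> (\<bar>b\<bar> + \<bar>e\<bar> + 1) * int j"  using jj by simp
  moreover have "(\<bar>b\<bar> + \<bar>e\<bar> + 1) * int j = \<bar>b\<bar> * int j + (\<bar>e\<bar> + 1) * int j" by (simp add: algebra_simps)
  moreover have "(\<bar>e\<bar> + 1) * int j \<ge> (\<bar>e\<bar> + 1)" using jj by simp
  ultimately have "a * int j ^ 2 + b * int j + e < 0" by linarith
  with assms(2) show False by (meson not_le)
qed

theorem corollary2p10:
  fixes a b e :: int
  assumes "a \<noteq> 0" and "e > 0"
    and "\<forall>j::nat. a * int j ^ 2 + b * int j + e \<ge> 0"
  shows "hdepth (\<lambda>j. nat (a * int j ^ 2 + b * int j + e)) \<le> 13"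
proof -
  let ?h = "\<lambda>j. nat (a * int j ^ 2 + b * int j + e)"
  let ?H = "\<lambda>j::nat. a * int j ^ 2 + b * int j + e"
  have hH: "\<And>j. int (?h j) = ?H j" using assms(3) by simp
  have ap: "a > 0" using a_pos assms(1,3) by blast
  have bnd: "d \<le> 13" if P: "\<forall>k\<le>d. beta ?h d k \<ge> 0" for d
  proof (rule ccontr)
    assume "\<not> d \<le> 13"
    then have dd: "d = 14 + (d - 14)" by simp
    have P': "\<forall>k\<le>14 + (d - 14). beta ?h (14 + (d - 14)) k \<ge> 0" using P dd by simp
    have Q: "\<forall>k\<le>14. beta ?h 14 k \<ge> 0" by (rule down14[OF P'])
    have g: "beta ?h 14 1 \<ge> 0" "beta ?h 14 4 \<ge> 0" "beta ?h 14 5 \<ge> 0" using Q by auto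
    have e1: "beta ?h 14 1 = a + b - 13 * e" unfolding b14(1)[OF hH] by (simp add: power2_eq_square)
    have e4: "beta ?h 14 4 = -105 * a - 183 * b + 771 * e" unfolding b14(2)[OF hH] by (simp add: power2_eq_square)
    have e5: "beta ?h 14 5 = 195 * a + 405 * b - 1461 * e" unfolding b14(3)[OF hH] by (simp add: power2_eq_square)
    show False using g e1 e4 e5 ap by linarith
  qed
  have P0: "\<forall>k\<le>0. beta ?h 0 k \<ge> 0" by (simp add: beta_def)
  have "\<forall>k\<le>hdepth ?h. beta ?h (hdepth ?h) k \<ge> 0"
    unfolding hdepth_def by (rule GreatestI_nat[where k=0 and b=13 and P="\<lambda>d. \<forall>k\<le>d. beta ?h d k \<ge> 0", OF P0 bnd])
  then show ?thesis by (rule bnd)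
qed

end
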